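(* Let $L$ be an infinite set and let $Q$ be either the edgeless cube $Q_L$ or the edged cube $\bar Q_L$. If $\vec\sigma$ is a universally convergent basic sequence and $\vec\tau$ is a basic sequence with $\vec\sigma\sim\vec\tau$, then $\vec\tau$ is universally convergent.
   Context: Let $L$ be an infinite set, $-L=\{-r:r\in L\}$ a disjoint copy of $L$, and $0$ a new element; $L^\dagger=-L\cup\{0\}\cup L$ with $-(-r)=r$, $-0=0$. Adjoin $\pm\infty$ with $-(+\infty)=-\infty$ and set $\bar L^\dagger=L^\dagger\cup\{\pm\infty\}$. Points of $U=(\bar L^\dagger)^3$ have coordinates $x,y,z$. The edgeless cube $Q_L$ is the set of points of $U$ with exactly one coordinate in $\{\pm\infty\}$ (cells). The edged cube $\bar Q_L$ is the set of cells $(p,i)$ with $p\in U$, $i\in\{x,y,z\}$, $p_i\in\{\pm\infty\}$ ($i$ marks the face). For $i\in\{x,y,z\}$, $\alpha\in\bar L^\dagger$, the quarter-turn twist $T_{i,\alpha}$ is the permutation of cells fixing every cell whose point $p$ has $p_i\ne\alpha$ and acting on the others by $T_{x,\alpha}(\alpha,y,z)=(\alpha,-z,y)$, $T_{y,\alpha}(x,\alpha,z)=(z,\alpha,-x)$, $T_{z,\alpha}(x,y,\alpha)=(-y,x,\alpha)$ (in $\bar Q_L$ the marked coordinate is carried along by the rotation). Basic twists are $T,T^2,T^3$ for quarter-turn twists $T$. A basic sequence is a sequence $\langle\sigma_\eta:\eta<\theta\rangle$ of basic twists of ordinal length $\theta$. A labelling is a map $f$ from cells to $X\cup\{\mathrm{NaC}\}$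 for a set $X\not\ni\mathrm{NaC}$; it is legal if it never takes value NaC; a configuration is a labelling with $X$ the six colors red, white, green, orange, yellow, blue. A twist $\sigma$ acts by $(\sigma f)(c)=f(\sigma^{-1}c)$. Applying $\vec\sigma=\langle\sigma_\eta:\eta<\theta\rangle$ to $f_0$ produces $f_{\eta+1}=\sigma_\eta f_\eta$, and for limit $\lambda\le\theta$, $f_\lambda(c)$ is the eventually constant value of $f_\eta(c)$ ($\eta<\lambda$) if it exists and NaC otherwise; the terminal labelling $f_\theta$ is denoted $\vec\sigma f_0$. $\vec\sigma$ is universally convergent if $\vec\sigma\,\mathrm{id}$ is legal, where $\mathrm{id}$ labels each cell by itself. $\vec\sigma\sim\vec\tau$ means $\vec\sigma f=\vec\tau f$ for every configuration $f$. *)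

theory Defs
  imports Main
begin

text \<open>The infinite set L is modelled by a type 'l (with an infiniteness assumption in
the theorem).  Neg r stands for -r, Zero for 0, PInf/MInf for plus/minus infinity.\<close>

datatype 'l coord = Neg 'l | Zero | Pos 'l | PInf | MInf

fun cneg :: "'l coord \<Rightarrow> 'l coord" where
  "cneg (Neg r) = Pos r"
| "cneg Zero = Zero"
| "cneg (Pos r) = Neg r"
| "cneg PInf = MInf"
| "cneg MInf = PInf"

definition isinf :: "'l coord \<Rightarrow> bool" where
  "isinf a \<longleftrightarrow> a = PInf \<or> a = MInf"

type_synonym 'l point = "'l coord \<times> 'l coord \<times> 'l coord"

datatype axis = AX | AY | AZ

fun getc :: "axis \<Rightarrow> 'l point \<Rightarrow> 'l coord" where
  "getc AX (x, y, z) = x"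
| "getc AY (x, y, z) = y"
| "getc AZ (x, y, z) = z"

fun rot :: "axis \<Rightarrow> 'l point \<Rightarrow> 'l point" where
  "rot AX (x, y, z) = (x, cneg z, y)"
| "rot AY (x, y, z) = (z, y, cneg x)"
| "rot AZ (x, y, z) = (cneg y, x, z)"

text \<open>How a rotation about axis j carries the marked coordinate (face marker).\<close>
fun rot_axis :: "axis \<Rightarrow> axis \<Rightarrow> axis" where
  "rot_axis AX AX = AX" | "rot_axis AX AY = AZ" | "rot_axis AX AZ = AY"
| "rot_axis AY AX = AZ" | "rot_axis AY AY = AY" | "rot_axis AY AZ = AX"
| "rot_axis AZ AX = AY" | "rot_axis AZ AY = AX" | "rot_axis AZ AZ = AZ"

definition edgeless_cells :: "'l point set" where
  "edgeless_cells = {p. length (filter isinf [getc AX p, getc AY p, getc AZ p]) = 1}"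

typedef 'l ecell = "edgeless_cells :: 'l point set"
  by (rule exI[of _ "(PInf, Zero, Zero)"]) (simp add: edgeless_cells_def isinf_def)

definition edged_cells :: "('l point \<times> axis) set" where
  "edged_cells = {(p, i). isinf (getc i p)}"

typedef 'l fcell = "edged_cells :: ('l point \<times> axis) set"
  by (rule exI[of _ "((PInf, Zero, Zero), AX)"]) (simp add: edged_cells_def isinf_def)

definition etwist :: "axis \<Rightarrow> 'l coord \<Rightarrow> 'l ecell \<Rightarrow> 'l ecell" where
  "etwist i a c = (let p = Rep_ecell c in
      if getc i p = a then Abs_ecell (rot i p) else c)"

definition ftwist :: "axis \<Rightarrow> 'l coord \<Rightarrow> 'l fcell \<Rightarrow> 'l fcell" where
  "ftwist i a c = (case Rep_fcell c of (p, j) \<Rightarrow>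
      if getc i p = a then Abs_fcell (rot i p, rot_axis i j) else c)"

datatype pw = P1 | P2 | P3

fun pw_nat :: "pw \<Rightarrow> nat" where
  "pw_nat P1 = 1" | "pw_nat P2 = 2" | "pw_nat P3 = 3"

text \<open>Basic twist BT i alpha k denotes T_{i,alpha}^k, k in {1,2,3}.\<close>
datatype 'l btwist = BT axis "'l coord" pw

text \<open>A labelling is a map cells => X option; None plays the role of NaC.
The generic machinery is parametrised by the quarter-turn twist action tw.\<close>

fun bt_perm :: "(axis \<Rightarrow> 'l coord \<Rightarrow> 'c \<Rightarrow> 'c) \<Rightarrow> 'l btwist \<Rightarrow> 'c \<Rightarrow> 'c" where
  "bt_perm tw (BT i a k) = (tw i a) ^^ pw_nat k"

definition act :: "(axis \<Rightarrow> 'l coord \<Rightarrow> 'c \<Rightarrow> 'c) \<Rightarrow> 'l btwist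
    \<Rightarrow> ('c \<Rightarrow> 'x option) \<Rightarrow> ('c \<Rightarrow> 'x option)" where
  "act tw s f = (\<lambda>c. f (inv (bt_perm tw s) c))"

definition is_pred :: "'o::wellorder \<Rightarrow> 'o \<Rightarrow> bool" where
  "is_pred z e \<longleftrightarrow> z < e \<and> \<not> (\<exists>x. z < x \<and> x < e)"

definition eventually_const :: "'o::wellorder \<Rightarrow> ('o \<Rightarrow> 'y) \<Rightarrow> 'y \<Rightarrow> bool" where
  "eventually_const lam g v \<longleftrightarrow> (\<exists>e0<lam. \<forall>x. e0 \<le> x \<and> x < lam \<longrightarrow> g x = v)"

definition run_step :: "(axis \<Rightarrow> 'l coord \<Rightarrow> 'c \<Rightarrow> 'c) \<Rightarrow> ('o::wellorder \<Rightarrow> 'l btwist)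
    \<Rightarrow> ('c \<Rightarrow> 'x option) \<Rightarrow> ('o \<Rightarrow> 'c \<Rightarrow> 'x option) \<Rightarrow> 'o \<Rightarrow> 'c \<Rightarrow> 'x option" where
  "run_step tw sig f0 F e =
     (if \<not> (\<exists>z. z < e) then f0
      else if (\<exists>z. is_pred z e) then
        (let z = (THE z. is_pred z e) in act tw (sig z) (F z))
      else (\<lambda>c. if (\<exists>v. eventually_const e (\<lambda>x. F x c) v)
                 then (THE v. eventually_const e (\<lambda>x. F x c) v) else None))"

text \<open>run tw sig f0 e is the labelling f_e obtained after the first e steps.\<close>
definition run :: "(axis \<Rightarrow> 'l coord \<Rightarrow> 'c \<Rightarrow> 'c) \<Rightarrow> ('o::wellorder \<Rightarrow> 'l btwist)
    \<Rightarrow> ('c \<Rightarrow> 'x option) \<Rightarrow> 'o \<Rightarrow> 'c \<Rightarrow> 'x option" where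
  "run tw sig f0 = wfrec {(a, b). a < b} (run_step tw sig f0)"

text \<open>The basic sequence is sig restricted to indices below theta (its length).\<close>
definition terminal :: "(axis \<Rightarrow> 'l coord \<Rightarrow> 'c \<Rightarrow> 'c) \<Rightarrow> ('o::wellorder \<Rightarrow> 'l btwist)
    \<Rightarrow> 'o \<Rightarrow> ('c \<Rightarrow> 'x option) \<Rightarrow> 'c \<Rightarrow> 'x option" where
  "terminal tw sig theta f0 = run tw sig f0 theta"

definition legal :: "('c \<Rightarrow> 'x option) \<Rightarrow> bool" where
  "legal f \<longleftrightarrow> (\<forall>c. f c \<noteq> None)"

definition univ_convergent :: "(axis \<Rightarrow> 'l coord \<Rightarrow> 'c \<Rightarrow> 'c) \<Rightarrow> ('o::wellorder \<Rightarrow> 'l btwist)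
    \<Rightarrow> 'o \<Rightarrow> bool" where
  "univ_convergent tw sig theta \<longleftrightarrow> legal (terminal tw sig theta (\<lambda>c. Some c))"

datatype color = Red | White | Green | Orange | Yellow | Blue

definition seq_equiv :: "(axis \<Rightarrow> 'l coord \<Rightarrow> 'c \<Rightarrow> 'c)
    \<Rightarrow> ('o1::wellorder \<Rightarrow> 'l btwist) \<Rightarrow> 'o1
    \<Rightarrow> ('o2::wellorder \<Rightarrow> 'l btwist) \<Rightarrow> 'o2 \<Rightarrow> bool" where
  "seq_equiv tw sig th tau th' \<longleftrightarrow>
     (\<forall>f :: 'c \<Rightarrow> color option. terminal tw sig th f = terminal tw tau th' f)"

end

theory Submission imports Defs begin

lemma is_pred_unique: "is_pred z e \<Longrightarrow> is_pred z' e \<Longrightarrow> z = z'"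
  unfolding is_pred_def by (metis linorder_neqE)

lemma run_step_cong:
  assumes "\<And>x. x < e \<Longrightarrow> F x = G x"
  shows "run_step tw sig f0 F e = run_step tw sig f0 G e"
proof -
  have ev: "eventually_const e (\<lambda>x. F x c) v = eventually_const e (\<lambda>x. G x c) v" for c v
    unfolding eventually_const_def using assms by (metis order.strict_trans1)
  have "is_pred z e \<Longrightarrow> F z = G z" for z using assms unfolding is_pred_def by blast
  then have "(\<exists>z. is_pred z e) \<Longrightarrow> F (THE z. is_pred z e) = G (THE z. is_pred z e)"
  proof -
    assume "\<exists>z. is_pred z e"
    then obtain z where z: "is_pred z e" by blast
    then have "(THE z. is_pred z e) = z" using is_pred_unique by blast
    then show ?thesis using z \<open>\<And>z. is_pred z e \<Longrightarrow> F z = G z\<close> by simp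
  qed
  moreover have "eventually_const e (\<lambda>x. F x c) = eventually_const e (\<lambda>x. G x c)" for c
    using ev by blast
  ultimately show ?thesis unfolding run_step_def Let_def
    by (intro if_cong refl ext) (auto simp del: eventually_const_def)
qed

lemma run_eq: "run tw sig f0 e = run_step tw sig f0 (run tw sig f0) e"
proof -
  have "run tw sig f0 e = run_step tw sig f0 (cut (run tw sig f0) {(a,b). a<b} e) e"
    unfolding run_def by (rule wfrec[OF wf])
  also have "\<dots> = run_step tw sig f0 (run tw sig f0) e"
    by (rule run_step_cong) (simp add: cut_apply)
  finally show ?thesis .
qed

lemma run_base: "\<not> (\<exists>z. z < e) \<Longrightarrow> run tw sig f0 e = f0"
  by (subst run_eq) (simp add: run_step_def)


lemma run_pred: "is_pred z e \<Longrightarrow> run tw sig f0 e = act tw (sig z) (run tw sig f0 z)"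
proof -
  assume p: "is_pred z e"
  then have t: "(THE z. is_pred z e) = z" using is_pred_unique by blast
  have "\<exists>z. z < e" using p unfolding is_pred_def by blast
  then show ?thesis using p t by (subst run_eq) (auto simp add: run_step_def Let_def)
qed

lemma ev_unique: "eventually_const e g v \<Longrightarrow> eventually_const e g w \<Longrightarrow> v = w"
  unfolding eventually_const_def by (metis max.cobounded1 max.cobounded2 max_less_iff_conj)

lemma run_lim: "z < e \<Longrightarrow> \<not> (\<exists>z. is_pred z e) \<Longrightarrow> run tw sig f0 e c =
   (if (\<exists>v. eventually_const e (\<lambda>x. run tw sig f0 x c) v)
                 then (THE v. eventually_const e (\<lambda>x. run tw sig f0 x c) v) else None)"
proof -
  assume a: "z < e" "\<not> (\<exists>z. is_pred z e)"
  have b: "\<exists>z. z < e" using a by blast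
  show ?thesis
    apply (rule trans[OF fun_cong[OF run_eq]])
    unfolding run_step_def using a(2) b by (simp only: if_False if_True not_not simp_thms)
qed

lemma run_lim_ev: "z < e \<Longrightarrow> \<not> (\<exists>z. is_pred z e) \<Longrightarrow>
   eventually_const e (\<lambda>x. run tw sig f0 x c) v \<Longrightarrow> run tw sig f0 e c = v"
proof -
  assume a: "z < e" "\<not> (\<exists>z. is_pred z e)" "eventually_const e (\<lambda>x. run tw sig f0 x c) v"
  have "(THE v. eventually_const e (\<lambda>x. run tw sig f0 x c) v) = v"
    by (rule the_equality[where P="eventually_const e (\<lambda>x. run tw sig f0 x c)", OF a(3)]) (rule ev_unique[OF _ a(3)])
  moreover have "run tw sig f0 e c = (if (\<exists>v. eventually_const e (\<lambda>x. run tw sig f0 x c) v)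
                 then (THE v. eventually_const e (\<lambda>x. run tw sig f0 x c) v) else None)"
    by (rule run_lim[OF a(1,2)])
  moreover have "\<exists>v. eventually_const e (\<lambda>x. run tw sig f0 x c) v" using a(3) by blast
  ultimately show ?thesis by (simp only: if_True)
qed

lemma run_lim_none: "z < e \<Longrightarrow> \<not> (\<exists>z. is_pred z e) \<Longrightarrow>
   \<not> (\<exists>v. eventually_const e (\<lambda>x. run tw sig f0 x c) v) \<Longrightarrow> run tw sig f0 e c = None"
proof -
  assume a: "z < e" "\<not> (\<exists>z. is_pred z e)" "\<not> (\<exists>v. eventually_const e (\<lambda>x. run tw sig f0 x c) v)"
  have "run tw sig f0 e c = (if (\<exists>v. eventually_const e (\<lambda>x. run tw sig f0 x c) v)
                 then (THE v. eventually_const e (\<lambda>x. run tw sig f0 x c) v) else None)"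
    by (rule run_lim[OF a(1,2)])
  then show ?thesis using a(3) by (simp only: if_False)
qed

lemma cases3:
  fixes e :: "'o::wellorder"
  obtains "\<not> (\<exists>z. z < e)" | z where "is_pred z e" | z where "z < e" "\<not> (\<exists>z. is_pred z e)"
  by blast

lemma pred_ge: "is_pred z e \<Longrightarrow> e0 < e \<Longrightarrow> e0 \<le> z"
  unfolding is_pred_def using not_le by blast

lemma act_apply: "act tw s f c = f (inv (bt_perm tw s) c)"
  by (simp add: act_def)

lemma run_push:
  "run tw sig (\<lambda>c. Some c) e c = Some d \<Longrightarrow> run tw sig f e c = f d"
proof (induction e arbitrary: c d rule: less_induct)
  case (less e)
  show ?case
  proof (cases e rule: cases3)
    case 1 then show ?thesis using less.prems by (simp add: run_base)
  next
    case (2 z)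
    then have "z < e" unfolding is_pred_def by blast
    then show ?thesis using less 2 by (simp add: run_pred act_apply)
  next
    case (3 z)
    have "\<exists>v. eventually_const e (\<lambda>x. run tw sig (\<lambda>c. Some c) x c) v"
    proof (rule ccontr)
      assume "\<not> (\<exists>v. eventually_const e (\<lambda>x. run tw sig (\<lambda>c. Some c) x c) v)"
      then have "run tw sig (\<lambda>c. Some c) e c = None" by (rule run_lim_none[OF 3])
      with less.prems show False by simp
    qed
    then obtain v where v: "eventually_const e (\<lambda>x. run tw sig (\<lambda>c. Some c) x c) v" by blast
    then have "v = Some d" using run_lim_ev[OF 3 v] less.prems by simp
    then have "eventually_const e (\<lambda>x. run tw sig f x c) (f d)"
      using v less.IH unfolding eventually_const_def by (metis order.strict_trans1 order_le_less)
    then show ?thesis using run_lim_ev 3 by metis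
  qed
qed

definition inv_key :: "(axis \<Rightarrow> 'l coord \<Rightarrow> 'c \<Rightarrow> 'c) \<Rightarrow> ('c \<Rightarrow> 'k) \<Rightarrow> bool" where
  "inv_key tw key \<longleftrightarrow> (\<forall>i a. bij (tw i a)) \<and> (\<forall>i a c. key (tw i a c) = key c)
     \<and> (\<forall>c. finite {d. key d = key c})"

lemma bt_bij: "inv_key tw key \<Longrightarrow> bij (bt_perm tw s)"
  by (cases s) (auto simp: inv_key_def)

lemma bt_key: "inv_key tw key \<Longrightarrow> key (bt_perm tw s c) = key c"
proof (cases s)
  case (BT i a k)
  assume "inv_key tw key"
  then have "key ((tw i a ^^ n) c) = key c" for n
    by (induction n) (auto simp: inv_key_def)
  then show ?thesis using BT by simp
qed

lemma bt_key_inv: "inv_key tw key \<Longrightarrow> key (inv (bt_perm tw s) c) = key c"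
  by (metis bt_bij bt_key bij_inv_eq_iff)

lemma run_key:
  assumes K: "inv_key tw key"
  shows "run tw sig (\<lambda>c. Some c) e c = Some d \<Longrightarrow> key d = key c"
proof (induction e arbitrary: c d rule: less_induct)
  case (less e)
  show ?case
  proof (cases e rule: cases3)
    case 1 then show ?thesis using less.prems by (simp add: run_base)
  next
    case (2 z)
    then have "z < e" unfolding is_pred_def by blast
    have "run tw sig (\<lambda>c. Some c) z (inv (bt_perm tw (sig z)) c) = Some d"
      using less.prems 2 by (simp add: run_pred act_apply)
    then have "key d = key (inv (bt_perm tw (sig z)) c)" by (rule less.IH[OF \<open>z < e\<close>])
    then show ?thesis using bt_key_inv[OF K, of "sig z" c] by (rule trans)
  next
    case (3 z)
    have "\<exists>v. eventually_const e (\<lambda>x. run tw sig (\<lambda>c. Some c) x c) v"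
    proof (rule ccontr)
      assume "\<not> (\<exists>v. eventually_const e (\<lambda>x. run tw sig (\<lambda>c. Some c) x c) v)"
      then have "run tw sig (\<lambda>c. Some c) e c = None" by (rule run_lim_none[OF 3])
      with less.prems show False by simp
    qed
    then obtain v where v: "eventually_const e (\<lambda>x. run tw sig (\<lambda>c. Some c) x c) v" by blast
    then have "v = Some d" using run_lim_ev[OF 3 v] less.prems by simp
    obtain e1 where "e1 < e" "\<forall>x. e1 \<le> x \<and> x < e \<longrightarrow> run tw sig (\<lambda>c. Some c) x c = v"
      using v unfolding eventually_const_def by blast
    then have "run tw sig (\<lambda>c. Some c) e1 c = Some d" using \<open>v = Some d\<close> by simp
    then show ?thesis by (rule less.IH[OF \<open>e1 < e\<close>])
  qed
qed


lemma run_persist: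
  assumes K: "inv_key tw key" and e0: "e0 \<le> e" and c0: "run tw sig f e0 c0 = None"
  shows "\<exists>c. key c = key c0 \<and> run tw sig f e c = None"
using e0 proof (induction e rule: less_induct)
  case (less e)
  show ?case
  proof (cases "e = e0")
    case True then show ?thesis using c0 by blast
  next
    case False
    then have lt: "e0 < e" using less.prems by simp
    show ?thesis
    proof (cases e rule: cases3)
      case 1 then show ?thesis using lt by blast
    next
      case (2 z)
      have "z < e" using 2 unfolding is_pred_def by blast
      have "e0 \<le> z" using pred_ge[OF 2 lt] .
      obtain c where c: "key c = key c0" "run tw sig f z c = None"
        using less.IH[OF \<open>z < e\<close> \<open>e0 \<le> z\<close>] by blast
      let ?p = "bt_perm tw (sig z)"
      have "inv ?p (?p c) = c" using bt_bij[OF K] by (simp add: bij_is_inj)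
      then have "run tw sig f e (?p c) = None" using c by (simp add: run_pred[OF 2] act_apply)
      moreover have "key (?p c) = key c0" using c bt_key[OF K] by simp
      ultimately show ?thesis by blast
    next
      case (3 z)
      define Orb where "Orb = {c. key c = key c0}"
      have fin: "finite Orb" using K unfolding inv_key_def Orb_def by blast
      have cof: "\<exists>c\<in>Orb. \<forall>b<e. \<exists>x. b \<le> x \<and> x < e \<and> run tw sig f x c = None"
      proof (rule ccontr)
        assume "\<not> ?thesis"
        then have "\<forall>c\<in>Orb. \<exists>b. b < e \<and> (\<forall>x. b \<le> x \<and> x < e \<longrightarrow> run tw sig f x c \<noteq> None)"
          by meson
        then obtain B where B: "\<forall>c\<in>Orb. B c < e \<and> (\<forall>x. B c \<le> x \<and> x < e \<longrightarrow> run tw sig f x c \<noteq> None)"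
          by metis
        define m where "m = Max (insert e0 (B ` Orb))"
        have "m < e" using fin B lt by (simp add: m_def)
        have "e0 \<le> m" by (simp add: m_def fin)
        obtain c where "key c = key c0" "run tw sig f m c = None"
          using less.IH[OF \<open>m < e\<close> \<open>e0 \<le> m\<close>] by blast
        moreover then have "c \<in> Orb" "B c \<le> m" using fin by (auto simp: Orb_def m_def)
        ultimately show False using B \<open>m < e\<close> by blast
      qed
      then obtain c where c: "c \<in> Orb" "\<forall>b<e. \<exists>x. b \<le> x \<and> x < e \<and> run tw sig f x c = None"
        by blast
      have "run tw sig f e c = None"
      proof (cases "\<exists>v. eventually_const e (\<lambda>x. run tw sig f x c) v")
        case True
        then obtain v where v: "eventually_const e (\<lambda>x. run tw sig f x c) v" by blast
        then obtain b where "b < e" "\<forall>x. b \<le> x \<and> x < e \<longrightarrow> run tw sig f x c = v"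
          unfolding eventually_const_def by blast
        then have "v = None" using c(2) by metis
        then show ?thesis using run_lim_ev[OF 3 v] by simp
      next
        case False then show ?thesis by (rule run_lim_none[OF 3])
      qed
      then show ?thesis using c(1) Orb_def by blast
    qed
  qed
qed

lemma gen_main:
  fixes sig :: "'o1::wellorder \<Rightarrow> 'l btwist" and tau :: "'o2::wellorder \<Rightarrow> 'l btwist"
    and tw :: "axis \<Rightarrow> 'l coord \<Rightarrow> 'c \<Rightarrow> 'c" and key :: "'c \<Rightarrow> 'k"
  assumes K: "inv_key tw key" and U: "univ_convergent tw sig th" and E: "seq_equiv tw sig th tau th'"
  shows "univ_convergent tw tau th'"
proof (rule ccontr)
  assume "\<not> ?thesis"
  then obtain c where c: "run tw tau (\<lambda>c. Some c) th' c = None"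
    unfolding univ_convergent_def legal_def terminal_def by blast
  define e0 where "e0 = (LEAST e. \<exists>c. run tw tau (\<lambda>c. Some c) e c = None)"
  have ex0: "\<exists>c. run tw tau (\<lambda>c. Some c) e0 c = None" unfolding e0_def
    by (rule LeastI_ex) (use c in blast)
  have le0: "e0 \<le> th'" unfolding e0_def by (rule Least_le) (use c in blast)
  have below: "run tw tau (\<lambda>c. Some c) x c \<noteq> None" if "x < e0" for x c
  proof
    assume "run tw tau (\<lambda>c. Some c) x c = None"
    then have "\<exists>c. run tw tau (\<lambda>c. Some c) x c = None" by blast
    with not_less_Least[OF that[unfolded e0_def]] show False by simp
  qed
  obtain c0 where c0: "run tw tau (\<lambda>c. Some c) e0 c0 = None" using ex0 by blast
  have lim1: "\<exists>z. z < e0"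
  proof (rule ccontr)
    assume "\<not> (\<exists>z. z < e0)"
    then show False using c0 run_base by (metis option.distinct(1))
  qed
  have lim2: "\<not> (\<exists>z. is_pred z e0)"
  proof
    assume "\<exists>z. is_pred z e0"
    then obtain z where z: "is_pred z e0" by blast
    then have "z < e0" unfolding is_pred_def by blast
    have "run tw tau (\<lambda>c. Some c) e0 c0 = run tw tau (\<lambda>c. Some c) z (inv (bt_perm tw (tau z)) c0)"
      by (simp add: run_pred[OF z] act_apply)
    then show False using c0 below[OF \<open>z < e0\<close>, of "inv (bt_perm tw (tau z)) c0"] by simp
  qed
  obtain z0 where z0: "z0 < e0" using lim1 by blast
  note L = z0 lim2
  have noev: "\<not> (\<exists>v. eventually_const e0 (\<lambda>x. run tw tau (\<lambda>c. Some c) x c0) v)"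
  proof
    assume "\<exists>v. eventually_const e0 (\<lambda>x. run tw tau (\<lambda>c. Some c) x c0) v"
    then obtain v where v: "eventually_const e0 (\<lambda>x. run tw tau (\<lambda>c. Some c) x c0) v" by blast
    then have "v = None" using run_lim_ev[OF L v] c0 by simp
    then obtain b where "b < e0" "run tw tau (\<lambda>c. Some c) b c0 = None"
      using v unfolding eventually_const_def by blast
    then show False using below by blast
  qed
  define g where "g x = the (run tw tau (\<lambda>c. Some c) x c0)" for x
  have g: "\<And>x. x < e0 \<Longrightarrow> run tw tau (\<lambda>c. Some c) x c0 = Some (g x)"
    using below unfolding g_def by auto
  have gk: "\<And>x. x < e0 \<Longrightarrow> key (g x) = key c0"
    using run_key[OF K g] by blast
  define Orb where "Orb = {d. key d = key c0}"
  have fin: "finite Orb" using K unfolding inv_key_def Orb_def by blast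
  have "\<exists>d\<in>Orb. \<forall>b<e0. \<exists>x. b \<le> x \<and> x < e0 \<and> g x = d"
  proof (rule ccontr)
    assume "\<not> ?thesis"
    then have "\<forall>d\<in>Orb. \<exists>b. b < e0 \<and> (\<forall>x. b \<le> x \<and> x < e0 \<longrightarrow> g x \<noteq> d)"
      by meson
    then obtain B where B: "\<forall>d\<in>Orb. B d < e0 \<and> (\<forall>x. B d \<le> x \<and> x < e0 \<longrightarrow> g x \<noteq> d)"
      by metis
    define m where "m = Max (insert z0 (B ` Orb))"
    have "m < e0" using fin B z0 by (simp add: m_def)
    have "g m \<in> Orb" using gk[OF \<open>m < e0\<close>] by (simp add: Orb_def)
    then have "B (g m) \<le> m" using fin by (simp add: m_def)
    then show False using B \<open>m < e0\<close> \<open>g m \<in> Orb\<close> by blast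
  qed
  then obtain d1 where d1: "\<forall>b<e0. \<exists>x. b \<le> x \<and> x < e0 \<and> g x = d1" by blast
  define f :: "'c \<Rightarrow> color option" where "f = (\<lambda>c. if c = d1 then Some Red else Some White)"
  have fg: "\<And>x. x < e0 \<Longrightarrow> run tw tau f x c0 = f (g x)"
    by (rule run_push, rule g)
  have "run tw tau f e0 c0 = None"
  proof (rule run_lim_none[OF L], rule notI)
    assume "\<exists>v. eventually_const e0 (\<lambda>x. run tw tau f x c0) v"
    then obtain v b where b: "b < e0" "\<forall>x. b \<le> x \<and> x < e0 \<longrightarrow> run tw tau f x c0 = v"
      unfolding eventually_const_def by blast
    show False
    proof (cases "v = Some Red")
      case True
      have "\<forall>x. b \<le> x \<and> x < e0 \<longrightarrow> run tw tau (\<lambda>c. Some c) x c0 = Some d1"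
      proof (intro allI impI)
        fix x assume x: "b \<le> x \<and> x < e0"
        then have "f (g x) = Some Red" using b(2) fg True by metis
        then have "g x = d1" unfolding f_def by (auto split: if_splits)
        then show "run tw tau (\<lambda>c. Some c) x c0 = Some d1" using g x by simp
      qed
      then have "eventually_const e0 (\<lambda>x. run tw tau (\<lambda>c. Some c) x c0) (Some d1)"
        using b(1) unfolding eventually_const_def by blast
      then show False using noev by blast
    next
      case False
      obtain x where "b \<le> x" "x < e0" "g x = d1" using d1 b(1) by blast
      then show False using b(2) fg False f_def by auto
    qed
  qed
  then obtain c1 where c1: "run tw tau f th' c1 = None" using run_persist[OF K le0] by blast
  obtain d where "run tw sig (\<lambda>c. Some c) th c1 = Some d"
    using U unfolding univ_convergent_def legal_def terminal_def by blast
  then have "run tw sig f th c1 = f d" by (rule run_push)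
  then have "run tw sig f th c1 \<noteq> None" unfolding f_def by simp
  moreover have "run tw sig f th = run tw tau f th'" using E unfolding seq_equiv_def terminal_def by blast
  ultimately show False using c1 by simp
qed


fun cabs :: "'l coord \<Rightarrow> 'l coord" where
  "cabs (Neg r) = Pos r" | "cabs Zero = Zero" | "cabs (Pos r) = Pos r"
| "cabs PInf = PInf" | "cabs MInf = PInf"

lemma cabs_cneg[simp]: "cabs (cneg v) = cabs v"
  by (cases v) auto

lemma cneg_cneg[simp]: "cneg (cneg v) = v"
  by (cases v) auto

lemma isinf_cneg[simp]: "isinf (cneg v) = isinf v"
  by (cases v) (auto simp: isinf_def)

lemma cabs_cases: "cabs v = v \<or> cneg (cabs v) = v"
  by (cases v) auto

fun pkey :: "'l point \<Rightarrow> 'l coord set" where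
  "pkey (x, y, z) = {cabs x, cabs y, cabs z}"

lemma pkey_rot[simp]: "pkey (rot i p) = pkey p"
  by (cases i; cases p) auto

lemma getc_rot[simp]: "getc i (rot i p) = getc i p"
  by (cases i; cases p) auto

lemma rot4: "rot i (rot i (rot i (rot i p))) = p"
  by (cases i; cases p) auto

lemma rot_axis4: "rot_axis i (rot_axis i (rot_axis i (rot_axis i j))) = j"
  by (cases i; cases j) auto

lemma edgeless_iff: "(x, y, z) \<in> edgeless_cells \<longleftrightarrow>
  (isinf x \<and> \<not> isinf y \<and> \<not> isinf z) \<or> (\<not> isinf x \<and> isinf y \<and> \<not> isinf z)
  \<or> (\<not> isinf x \<and> \<not> isinf y \<and> isinf z)"
  unfolding edgeless_cells_def by (cases "isinf x"; cases "isinf y"; cases "isinf z") simp_all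

lemma rot_edgeless: "p \<in> edgeless_cells \<Longrightarrow> rot i p \<in> edgeless_cells"
proof -
  assume "p \<in> edgeless_cells"
  moreover obtain x y z where "p = (x, y, z)" by (cases p) auto
  ultimately show ?thesis by (cases i) (auto simp: edgeless_iff)
qed

lemma rot_edged: "(p, j) \<in> edged_cells \<Longrightarrow> (rot i p, rot_axis i j) \<in> edged_cells"
  by (cases i; cases j; cases p) (auto simp: edged_cells_def)

lemma Rep_etwist: "Rep_ecell (etwist i a c) =
   (if getc i (Rep_ecell c) = a then rot i (Rep_ecell c) else Rep_ecell c)"
  unfolding etwist_def Let_def
  using Abs_ecell_inverse[OF rot_edgeless[OF Rep_ecell[of c]]] by simp

lemma Rep_ftwist: "Rep_fcell (ftwist i a c) =
   (if getc i (fst (Rep_fcell c)) = a then (rot i (fst (Rep_fcell c)), rot_axis i (snd (Rep_fcell c)))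
    else Rep_fcell c)"
proof -
  obtain p j where pj: "Rep_fcell c = (p, j)" by fastforce
  have "(p, j) \<in> edged_cells" using Rep_fcell[of c] pj by simp
  then show ?thesis unfolding ftwist_def using pj Abs_fcell_inverse[OF rot_edged[OF \<open>(p, j) \<in> edged_cells\<close>, of i]] by simp
qed

lemma etwist4: "etwist i a (etwist i a (etwist i a (etwist i a c))) = c"
  by (simp add: Rep_ecell_inject[symmetric] Rep_etwist rot4)

lemma ftwist4: "ftwist i a (ftwist i a (ftwist i a (ftwist i a c))) = c"
  by (simp add: Rep_fcell_inject[symmetric] Rep_ftwist rot4 rot_axis4)

lemma bij4: assumes "\<And>c. t (t (t (t c))) = c" shows "bij t"
  by (rule o_bij[of "t \<circ> t \<circ> t"]) (auto simp: assms fun_eq_iff)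

lemma finite_cabs: "finite K \<Longrightarrow> finite {v. cabs v \<in> K}"
proof -
  assume "finite K"
  moreover have "{v. cabs v \<in> K} \<subseteq> K \<union> cneg ` K"
  proof
    fix v assume "v \<in> {v. cabs v \<in> K}"
    then have k: "cabs v \<in> K" by simp
    from cabs_cases[of v] show "v \<in> K \<union> cneg ` K"
    proof
      assume "cabs v = v" then show ?thesis using k by simp
    next
      assume "cneg (cabs v) = v"
      then have "v \<in> cneg ` K" using k by (auto intro: image_eqI[of v cneg "cabs v"])
      then show ?thesis by simp
    qed
  qed
  ultimately show ?thesis by (meson finite_Un finite_imageI finite_subset)
qed

lemma pkey_sub: "{p. pkey p = K} \<subseteq> {v. cabs v \<in> K} \<times> {v. cabs v \<in> K} \<times> {v. cabs v \<in> K}"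
  by auto

lemma finite_pkey: "finite {p. pkey p = pkey q}"
proof -
  obtain x y z where "q = (x, y, z)" by (cases q) auto
  then have "finite (pkey q)" by simp
  then have "finite {v. cabs v \<in> pkey q}" by (rule finite_cabs)
  then have "finite ({v. cabs v \<in> pkey q} \<times> {v. cabs v \<in> pkey q} \<times> {v. cabs v \<in> pkey q})"
    by (intro finite_SigmaI)
  then show ?thesis using pkey_sub[of "pkey q"] by (rule finite_subset[rotated])
qed

definition ekey :: "'l ecell \<Rightarrow> 'l coord set" where "ekey c = pkey (Rep_ecell c)"
definition fkey :: "'l fcell \<Rightarrow> 'l coord set" where "fkey c = pkey (fst (Rep_fcell c))"

lemma axis_univ: "(UNIV :: axis set) = {AX, AY, AZ}"
  using axis.exhaust by auto

lemma inv_key_e: "inv_key etwist ekey"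
  unfolding inv_key_def
proof (intro conjI allI)
  show "bij (etwist i a)" for i a by (rule bij4) (rule etwist4)
  show "ekey (etwist i a c) = ekey c" for i a c by (simp add: ekey_def Rep_etwist)
  show "finite {d. ekey d = ekey c}" for c
  proof -
    have "Rep_ecell ` {d. ekey d = ekey c} \<subseteq> {p. pkey p = pkey (Rep_ecell c)}"
      by (auto simp: ekey_def)
    then have "finite (Rep_ecell ` {d. ekey d = ekey c})" using finite_pkey finite_subset by blast
    moreover have "inj Rep_ecell" by (simp add: Rep_ecell_inject inj_on_def)
    ultimately show ?thesis by (meson finite_imageD inj_on_subset subset_UNIV)
  qed
qed

lemma inv_key_f: "inv_key (ftwist :: axis \<Rightarrow> 'l coord \<Rightarrow> 'l fcell \<Rightarrow> 'l fcell) fkey"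
  unfolding inv_key_def
proof (intro conjI allI)
  show "bij (ftwist i a :: 'l fcell \<Rightarrow> 'l fcell)" for i a by (rule bij4) (rule ftwist4)
  show "fkey (ftwist i a c) = fkey c" for i a and c :: "'l fcell" by (simp add: fkey_def Rep_ftwist)
  show "finite {d. fkey d = fkey c}" for c :: "'l fcell"
  proof -
    have sub: "Rep_fcell ` {d. fkey d = fkey c} \<subseteq> {p. pkey p = pkey (fst (Rep_fcell c))} \<times> (UNIV :: axis set)"
    proof
      fix w assume "w \<in> Rep_fcell ` {d. fkey d = fkey c}"
      then obtain d where "w = Rep_fcell d" "fkey d = fkey c" by blast
      then show "w \<in> {p. pkey p = pkey (fst (Rep_fcell c))} \<times> (UNIV :: axis set)"
        by (simp add: fkey_def mem_Times_iff)
    qed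
    have "finite ({p. pkey p = pkey (fst (Rep_fcell c))} \<times> (UNIV :: axis set))"
      by (rule finite_SigmaI[OF finite_pkey]) (simp add: axis_univ)
    then have "finite (Rep_fcell ` {d. fkey d = fkey c})" using sub by (rule finite_subset[rotated])
    moreover have "inj Rep_fcell" by (simp add: Rep_fcell_inject inj_on_def)
    ultimately show ?thesis by (meson finite_imageD inj_on_subset subset_UNIV)
  qed
qed

theorem lemma3p7:
  fixes sig :: "'o1::wellorder \<Rightarrow> 'l btwist" and th :: 'o1
    and tau :: "'o2::wellorder \<Rightarrow> 'l btwist" and th' :: 'o2
  assumes "infinite (UNIV :: 'l set)"
  shows "(univ_convergent (etwist :: axis \<Rightarrow> 'l coord \<Rightarrow> 'l ecell \<Rightarrow> 'l ecell) sig th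
            \<and> seq_equiv etwist sig th tau th'
            \<longrightarrow> univ_convergent etwist tau th')
       \<and> (univ_convergent (ftwist :: axis \<Rightarrow> 'l coord \<Rightarrow> 'l fcell \<Rightarrow> 'l fcell) sig th
            \<and> seq_equiv ftwist sig th tau th'
            \<longrightarrow> univ_convergent ftwist tau th')"
  using gen_main[OF inv_key_e] gen_main[OF inv_key_f] by blast

end
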